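(* Let $\lambda$ be a partition with $n$ parts and let $\beta \in U_\lambda(n)$. If the terminal pair $(\lambda,\beta)$ is nonpermutable, then $\beta \in UGC_\lambda(n) \cap UBP_\lambda(n)$.
   Context: Fix an integer $n \geq 1$ and write $[k] = \{1,\dots,k\}$. A partition is $\lambda = (\lambda_1,\dots,\lambda_n)$ with $\lambda_1 \geq \dots \geq \lambda_n \geq 0$ integers. Let $R_\lambda \subseteq [n-1]$ be the set of $q \in [n-1]$ with $\lambda_q > \lambda_{q+1}$; write its elements $q_1 < \dots < q_r$, and set $q_0 := 0$, $q_{r+1} := n$. For $h \in [r+1]$ the $h$-th carrel is the index interval $\{q_{h-1}+1,\dots,q_h\}$. A $\lambda$-tuple is an $n$-tuple $\beta$ with entries in $[n]$, considered with this carrel structure; it is upper if $\beta_i \geq i$ for all $i$. $U_\lambda(n)$ is the set of upper $\lambda$-tuples. Critical indices: for $\beta \in U_\lambda(n)$ and $h \in [r+1]$, set $x_1 := q_h$; given $x_{u-1}$, if some index $x$ with $q_{h-1} < x < x_{u-1}$ satisfies $\beta_{x_{u-1}} - \beta_x > x_{u-1} - x$, let $x_u$ be the largest such $x$, otherwise stop. The $x_u$ are the critical indices of $\beta$ in carrel $h$; the pairs $(x_u,\beta_{x_u})$ form its critical list. For $i \in [n]$ let $x(i)$ be the smallest critical index in the carrel of $i$ with $x(i) \geq i$. The $\lambda$-platform is $\Xi_\lambda(\beta) := \xi$ with $\xi_i := \beta_{x(i)}$. The critical list is a flag critical list if for every $h \in [r]$, $\beta_{q_h} \leq \beta_k$ where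 $k$ is the smallest critical index of $\beta$ in carrel $h+1$. $UGC_\lambda(n)$ is the set of $\beta \in U_\lambda(n)$ with flag critical list; $UBP_\lambda(n)$ is the set of $\beta \in U_\lambda(n)$ with $\beta_i \leq \Xi_\lambda(\beta)_i$ for all $i$. Lattice paths: lattice points are integer pairs $(a,b)$ with $a \geq 0$, $b \geq 1$. A lattice path is a sequence of lattice points each consecutive step of which is $(a,b) \to (a+1,b)$ or $(a,b) \to (a,b+1)$. An $n$-path is $(\Lambda_1,\dots,\Lambda_n)$ with $\Lambda_m$ a lattice path starting at $(n-m,m)$. The terminals of $(\lambda,\beta)$ are $P_m := (\lambda_m + n - m, \beta_m)$, $m \in [n]$. For a permutation $\pi$ of $[n]$, $\mathcal{LD}_\lambda(\beta;\pi)$ is the set of $n$-paths with $\Lambda_m$ ending at $P_{\pi_m}$ for every $m$ and no two distinct components sharing a lattice point. The pair $(\lambda,\beta)$ is nonpermutable if $\mathcal{LD}_\lambda(\beta;\pi) = \emptyset$ for every permutation $\pi \neq (1,\dots,n)$. *)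

theory Defs
  imports Main "HOL-Combinatorics.Permutations"
begin

text \<open>Conventions: n-tuples are functions on nat, only values at indices 1..n matter.\<close>

definition is_partition :: "nat \<Rightarrow> (nat \<Rightarrow> nat) \<Rightarrow> bool" where
  "is_partition n lam \<longleftrightarrow> (\<forall>i. 1 \<le> i \<and> i < n \<longrightarrow> lam (Suc i) \<le> lam i)"

definition Rset :: "nat \<Rightarrow> (nat \<Rightarrow> nat) \<Rightarrow> nat set" where
  "Rset n lam = {q. 1 \<le> q \<and> q < n \<and> lam (Suc q) < lam q}"

definition Upper :: "nat \<Rightarrow> (nat \<Rightarrow> nat) set" where
  "Upper n = {beta. \<forall>i\<in>{1..n}. i \<le> beta i \<and> beta i \<le> n}"

text \<open>Carrels are indexed by their top index t in R union {n}; their bottom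
  boundary (exclusive) is the largest element of R union {0} below t
  (this is q_(h-1) when t = q_h).\<close>
definition carrel_low :: "nat \<Rightarrow> (nat \<Rightarrow> nat) \<Rightarrow> nat \<Rightarrow> nat" where
  "carrel_low n lam t = Max ({q \<in> Rset n lam \<union> {0}. q < t})"

definition carrel_top :: "nat \<Rightarrow> (nat \<Rightarrow> nat) \<Rightarrow> nat \<Rightarrow> nat" where
  "carrel_top n lam i = Min ({q \<in> Rset n lam \<union> {n}. i \<le> q})"

inductive_set crit :: "nat \<Rightarrow> nat \<Rightarrow> (nat \<Rightarrow> nat) \<Rightarrow> nat set"
  for L U :: nat and beta :: "nat \<Rightarrow> nat" where
  top: "U \<in> crit L U beta"
| step: "\<lbrakk> y \<in> crit L U beta; L < x; x < y;
           int (beta y) - int (beta x) > int y - int x;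
           \<forall>z. x < z \<and> z < y \<longrightarrow> \<not> (int (beta y) - int (beta z) > int y - int z) \<rbrakk>
         \<Longrightarrow> x \<in> crit L U beta"

definition crit_carrel :: "nat \<Rightarrow> (nat \<Rightarrow> nat) \<Rightarrow> (nat \<Rightarrow> nat) \<Rightarrow> nat \<Rightarrow> nat set" where
  "crit_carrel n lam beta t = crit (carrel_low n lam t) t beta"

definition xcrit :: "nat \<Rightarrow> (nat \<Rightarrow> nat) \<Rightarrow> (nat \<Rightarrow> nat) \<Rightarrow> nat \<Rightarrow> nat" where
  "xcrit n lam beta i = Min {x \<in> crit_carrel n lam beta (carrel_top n lam i). i \<le> x}"

definition platform :: "nat \<Rightarrow> (nat \<Rightarrow> nat) \<Rightarrow> (nat \<Rightarrow> nat) \<Rightarrow> nat \<Rightarrow> nat" where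
  "platform n lam beta i = beta (xcrit n lam beta i)"

text \<open>Flag critical list: for each q_h in R (h in [r]), beta q_h <= beta k with k the
  smallest critical index of the next carrel (whose top is the smallest element of
  R union {n} above q_h).\<close>
definition UGC :: "nat \<Rightarrow> (nat \<Rightarrow> nat) \<Rightarrow> (nat \<Rightarrow> nat) set" where
  "UGC n lam = {beta \<in> Upper n. \<forall>q \<in> Rset n lam.
      beta q \<le> beta (Min (crit_carrel n lam beta (carrel_top n lam (Suc q))))}"

definition UBP :: "nat \<Rightarrow> (nat \<Rightarrow> nat) \<Rightarrow> (nat \<Rightarrow> nat) set" where
  "UBP n lam = {beta \<in> Upper n. \<forall>i\<in>{1..n}. beta i \<le> platform n lam beta i}"

definition lattice_step :: "nat \<times> nat \<Rightarrow> nat \<times> nat \<Rightarrow> bool" where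
  "lattice_step p q \<longleftrightarrow> q = (fst p + 1, snd p) \<or> q = (fst p, snd p + 1)"

definition lattice_path :: "(nat \<times> nat) list \<Rightarrow> bool" where
  "lattice_path xs \<longleftrightarrow> xs \<noteq> [] \<and> (\<forall>p\<in>set xs. 1 \<le> snd p)
     \<and> (\<forall>i. Suc i < length xs \<longrightarrow> lattice_step (xs ! i) (xs ! Suc i))"

definition terminal :: "nat \<Rightarrow> (nat \<Rightarrow> nat) \<Rightarrow> (nat \<Rightarrow> nat) \<Rightarrow> nat \<Rightarrow> nat \<times> nat" where
  "terminal n lam beta m = (lam m + n - m, beta m)"

definition LD :: "nat \<Rightarrow> (nat \<Rightarrow> nat) \<Rightarrow> (nat \<Rightarrow> nat) \<Rightarrow> (nat \<Rightarrow> nat)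
                  \<Rightarrow> (nat \<Rightarrow> (nat \<times> nat) list) set" where
  "LD n lam beta pi = {Lam. (\<forall>m\<in>{1..n}. lattice_path (Lam m)
        \<and> hd (Lam m) = (n - m, m) \<and> last (Lam m) = terminal n lam beta (pi m))
      \<and> (\<forall>m\<in>{1..n}. \<forall>m'\<in>{1..n}. m \<noteq> m' \<longrightarrow> set (Lam m) \<inter> set (Lam m') = {})}"

definition nonpermutable :: "nat \<Rightarrow> (nat \<Rightarrow> nat) \<Rightarrow> (nat \<Rightarrow> nat) \<Rightarrow> bool" where
  "nonpermutable n lam beta \<longleftrightarrow>
     (\<forall>pi. pi permutes {1..n} \<and> pi \<noteq> id \<longrightarrow> LD n lam beta pi = {})"

end

theory Submission
  imports Defs
begin

definition hp :: "nat \<Rightarrow> nat \<Rightarrow> nat \<Rightarrow> (nat \<times> nat) list" where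
  "hp a b y = map (\<lambda>x. (x, y)) [a..<Suc b]"
definition vp :: "nat \<Rightarrow> nat \<Rightarrow> nat \<Rightarrow> (nat \<times> nat) list" where
  "vp x a b = map (\<lambda>y. (x, y)) [a..<Suc b]"

definition Qp :: "nat \<Rightarrow> nat \<Rightarrow> nat \<Rightarrow> nat \<Rightarrow> nat \<Rightarrow> nat \<Rightarrow> (nat \<times> nat) list" where
  "Qp x0 y0 x1 y1 x2 y2 = hp x0 x1 y0 @ vp x1 (Suc y0) y1 @ hp (Suc x1) x2 y1 @ vp x2 (Suc y1) y2"

lemma succ_upt: "successively (\<lambda>x z. z = Suc x) [a..<b]"
  by (simp add: successively_conv_nth)

lemma hp_succ: "successively lattice_step (hp a b y)"
  unfolding hp_def successively_map
  by (rule successively_mono[OF succ_upt]) (simp add: lattice_step_def)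

lemma vp_succ: "successively lattice_step (vp x a b)"
  unfolding vp_def successively_map
  by (rule successively_mono[OF succ_upt]) (simp add: lattice_step_def)

lemma lattice_path_succ: "lattice_path xs \<longleftrightarrow> xs \<noteq> [] \<and> (\<forall>p\<in>set xs. 1 \<le> snd p) \<and> successively lattice_step xs"
  by (simp add: lattice_path_def successively_conv_nth)

lemma hp_simps: "a \<le> b \<Longrightarrow> hp a b y \<noteq> [] \<and> hd (hp a b y) = (a, y) \<and> last (hp a b y) = (b, y)"
  by (simp add: hp_def hd_map last_map del: upt_Suc)
lemma vp_simps: "a \<le> b \<Longrightarrow> vp x a b \<noteq> [] \<and> hd (vp x a b) = (x, a) \<and> last (vp x a b) = (x, b)"
  by (simp add: vp_def hd_map last_map del: upt_Suc)
lemma hp_empty: "hp a b y = [] \<longleftrightarrow> b < a" by (auto simp: hp_def)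
lemma vp_empty: "vp x a b = [] \<longleftrightarrow> b < a" by (auto simp: vp_def)

definition inQ :: "nat \<Rightarrow> nat \<Rightarrow> nat \<Rightarrow> nat \<Rightarrow> nat \<Rightarrow> nat \<Rightarrow> nat \<Rightarrow> nat \<Rightarrow> bool" where
  "inQ x0 y0 x1 y1 x2 y2 x y \<longleftrightarrow> (y = y0 \<and> x0 \<le> x \<and> x \<le> x1) \<or> (x = x1 \<and> Suc y0 \<le> y \<and> y \<le> y1)
     \<or> (y = y1 \<and> Suc x1 \<le> x \<and> x \<le> x2) \<or> (x = x2 \<and> Suc y1 \<le> y \<and> y \<le> y2)"

lemma Qp_set: "(x, y) \<in> set (Qp x0 y0 x1 y1 x2 y2) \<longleftrightarrow> inQ x0 y0 x1 y1 x2 y2 x y"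
  unfolding Qp_def inQ_def hp_def vp_def by auto

lemma Qp_props:
  assumes "x0 \<le> x1" "x1 \<le> x2" "y0 \<le> y1" "y1 \<le> y2" "1 \<le> y0"
  shows "lattice_path (Qp x0 y0 x1 y1 x2 y2) \<and> hd (Qp x0 y0 x1 y1 x2 y2) = (x0, y0)
         \<and> last (Qp x0 y0 x1 y1 x2 y2) = (x2, y2)"
proof -
  have A: "hp x0 x1 y0 \<noteq> []" "hd (hp x0 x1 y0) = (x0,y0)" "last (hp x0 x1 y0) = (x1, y0)"
    using hp_simps[OF assms(1)] by auto
  have pos: "\<forall>p\<in>set (Qp x0 y0 x1 y1 x2 y2). 1 \<le> snd p"
    using assms unfolding Qp_def hp_def vp_def by auto
  have succ: "successively lattice_step (Qp x0 y0 x1 y1 x2 y2)"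
    unfolding Qp_def successively_append_iff
    using assms hp_succ vp_succ
    by (cases "y0 = y1"; cases "x1 = x2"; cases "y1 = y2")
       (auto simp: hp_empty vp_empty hd_append last_append hp_simps vp_simps lattice_step_def)
  have "last (Qp x0 y0 x1 y1 x2 y2) = (x2, y2)"
    unfolding Qp_def using assms
    by (cases "y0 = y1"; cases "x1 = x2"; cases "y1 = y2")
       (auto simp: hp_empty vp_empty last_append hp_simps vp_simps)
  then show ?thesis using A pos succ by (simp add: lattice_path_succ Qp_def)
qed

lemma crit_le: "x \<in> crit L U beta \<Longrightarrow> x \<le> U"
  by (induction rule: crit.induct) auto

lemma crit_gt: "x \<in> crit L U beta \<Longrightarrow> L < U \<Longrightarrow> L < x"
  by (induction rule: crit.induct) auto

lemma crit_min: "x \<in> crit L U beta \<Longrightarrow> x < z \<Longrightarrow> z \<le> U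
   \<Longrightarrow> int (beta x) - int x < int (beta z) - int z"
proof (induction arbitrary: z rule: crit.induct)
  case top then show ?case by simp
next
  case (step y x)
  show ?case
  proof (cases "z < y")
    case True
    then have "\<not> (int (beta y) - int (beta z) > int y - int z)" using step by blast
    then show ?thesis using step by linarith
  next
    case False
    show ?thesis
    proof (cases "z = y")
      case True then show ?thesis using step by simp
    next
      case False
      then have "int (beta y) - int y < int (beta z) - int z" using step \<open>\<not> z < y\<close> by simp
      then show ?thesis using step by linarith
    qed
  qed
qed

definition cyc :: "nat \<Rightarrow> nat \<Rightarrow> nat \<Rightarrow> nat" where
  "cyc a b m = (if a \<le> m \<and> m < b then Suc m else if m = b then a else m)"

lemma cyc_permutes:
  assumes "1 \<le> a" "a < b" "b \<le> n"
  shows "cyc a b permutes {1..n}"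
proof (rule bij_imp_permutes)
  show "bij_betw (cyc a b) {1..n} {1..n}"
  proof (rule bij_betw_imageI)
    show "inj_on (cyc a b) {1..n}"
      using assms by (intro inj_onI) (auto simp: cyc_def split: if_splits)
    show "cyc a b ` {1..n} = {1..n}"
    proof
      show "cyc a b ` {1..n} \<subseteq> {1..n}" using assms by (auto simp: cyc_def)
      show "{1..n} \<subseteq> cyc a b ` {1..n}"
      proof
        fix y assume y: "y \<in> {1..n}"
        show "y \<in> cyc a b ` {1..n}"
        proof (cases "a < y \<and> y \<le> b")
          case True
          then have "cyc a b (y - 1) = y" by (auto simp: cyc_def)
          moreover have "y - 1 \<in> {1..n}" using True assms y by auto
          ultimately show ?thesis by (metis image_eqI)
        next
          case False
          show ?thesis
          proof (cases "y = a")
            case True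
            then have "cyc a b b = y" using assms by (auto simp: cyc_def)
            then show ?thesis using assms by force
          next
            case False
            then have "cyc a b y = y" using \<open>\<not> (a < y \<and> y \<le> b)\<close> assms by (auto simp: cyc_def)
            then show ?thesis using y by force
          qed
        qed
      qed
    qed
  qed
  show "\<And>x. x \<notin> {1..n} \<Longrightarrow> cyc a b x = x" using assms by (auto simp: cyc_def)
qed

lemma lam_mono:
  assumes "is_partition n lam" "1 \<le> i" "i \<le> j" "j \<le> n"
  shows "lam j \<le> lam i"
  using assms(3,4)
proof (induction j rule: dec_induct)
  case base then show ?case by simp
next
  case (step k)
  then have "lam (Suc k) \<le> lam k" using assms(1,2) unfolding is_partition_def by auto
  then show ?case using step by simp
qed

lemma inQ_box: "inQ x0 y0 x1 y1 x2 y2 x y \<Longrightarrow> y0 \<le> y1 \<Longrightarrow> x1 \<le> x2 \<Longrightarrow> y0 \<le> y \<and> x \<le> x2"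
  unfolding inQ_def by auto

lemma pair_disj:
  fixes n a b m m' :: nat and lam beta c X1 Y1 X2 Y2 :: "nat \<Rightarrow> nat"
  assumes c: "\<And>i. c i = lam i + n - i"
  and lm: "\<And>i j. 1 \<le> i \<Longrightarrow> i \<le> j \<Longrightarrow> j \<le> n \<Longrightarrow> lam j \<le> lam i"
  and bt: "\<And>i. 1 \<le> i \<Longrightarrow> i \<le> n \<Longrightarrow> i \<le> beta i \<and> beta i \<le> n"
  and ab: "1 \<le> a" "a < b" "b \<le> n"
  and lb: "1 \<le> lam b"
  and bab: "beta b < beta a"
  and mid: "\<And>m. a < m \<Longrightarrow> m < b \<Longrightarrow> beta m \<le> beta b"
  and X1: "\<And>k. X1 k = (if k < a then c k else if k < b then c (Suc k) else if k = b then c b - 1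
              else if lam k = lam b then c k - 1 else c k)"
  and Y1: "\<And>k. Y1 k = (if k < a then beta k else if k < b then beta (Suc k) else if k = b then beta b + 1
              else if lam k = lam b then beta b + 1 + (k - b) else beta k)"
  and X2: "\<And>k. X2 k = (if k < a then c k else if k < b then c (Suc k) else if k = b then c a else c k)"
  and Y2: "\<And>k. Y2 k = (if k < a then beta k else if k < b then beta (Suc k) else if k = b then beta a else beta k)"
  and mm: "1 \<le> m" "m < m'" "m' \<le> n"
  and i1: "inQ (n-m) m (X1 m) (Y1 m) (X2 m) (Y2 m) x y"
  and i2: "inQ (n-m') m' (X1 m') (Y1 m') (X2 m') (Y2 m') x y"
shows False
proof -
  have cm: "c j + (j - i) \<le> c i \<and> (lam j < lam i \<longrightarrow> c j + (j-i) + 1 \<le> c i)"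
    if "1 \<le> i" "i < j" "j \<le> n" for i j
  proof -
    have "lam j \<le> lam i" using lm that by simp
    then show ?thesis using c[of i] c[of j] that by auto
  qed
  have ceq: "c j + (j - i) = c i" if "1 \<le> i" "i < j" "j \<le> n" "lam j = lam i" for i j
    using c[of i] c[of j] that by auto
  have bb: "b \<le> beta b" using bt[of b] ab by simp
  have cge: "n - i + lam i = c i" if "i \<le> n" for i using c[of i] that by auto
  consider (HH) "m' < a" | (HS) "m < a" "a \<le> m'" "m' < b" | (HB) "m < a" "m' = b"
    | (HT) "m < a" "b < m'" | (SS) "a \<le> m" "m' < b" | (SB) "a \<le> m" "m < b" "m' = b"
    | (ST) "a \<le> m" "m < b" "b < m'" | (BZ) "m = b" "lam m' = lam b"
    | (BH) "m = b" "lam m' \<noteq> lam b" | (ZZ) "b < m" "lam m = lam b" "lam m' = lam b"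
    | (ZH) "b < m" "lam m = lam b" "lam m' \<noteq> lam b" | (HZ) "b < m" "lam m \<noteq> lam b" "lam m' = lam b"
    | (HH2) "b < m" "lam m \<noteq> lam b" "lam m' \<noteq> lam b"
  proof (cases "m < a")
    case T1: True
    show thesis
    proof (cases "m' < a")
      case True then show thesis by (rule that(1))
    next
      case F2: False
      show thesis
      proof (cases "m' < b")
        case True then show thesis using T1 F2 by (intro that(2)) auto
      next
        case F3: False
        show thesis
        proof (cases "m' = b")
          case True then show thesis using T1 by (intro that(3)) auto
        next
          case False then show thesis using T1 F3 by (intro that(4)) auto
        qed
      qed
    qed
  next
    case F1: False
    show thesis
    proof (cases "m < b")
      case T2: True
      show thesis
      proof (cases "m' < b")
        case True then show thesis using F1 by (intro that(5)) auto
      next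
        case F3: False
        show thesis
        proof (cases "m' = b")
          case True then show thesis using F1 T2 by (intro that(6)) auto
        next
          case False then show thesis using F1 T2 F3 by (intro that(7)) auto
        qed
      qed
    next
      case F2: False
      show thesis
      proof (cases "m = b")
        case T3: True
        show thesis
        proof (cases "lam m' = lam b")
          case True then show thesis using T3 by (intro that(8)) auto
        next
          case False then show thesis using T3 by (intro that(9)) auto
        qed
      next
        case F3: False
        then have bm: "b < m" using F2 by auto
        show thesis
        proof (cases "lam m = lam b"; cases "lam m' = lam b")
          assume "lam m = lam b" "lam m' = lam b" then show thesis using bm by (intro that(10)) auto
        next
          assume "lam m = lam b" "lam m' \<noteq> lam b" then show thesis using bm by (intro that(11)) auto
        next
          assume "lam m \<noteq> lam b" "lam m' = lam b" then show thesis using bm by (intro that(12)) auto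
        next
          assume "lam m \<noteq> lam b" "lam m' \<noteq> lam b" then show thesis using bm by (intro that(13)) auto
        qed
      qed
    qed
  qed
  then show False
  proof cases
    case HH
    have e: "X1 m = c m" "Y1 m = beta m" "X2 m = c m" "Y2 m = beta m" "X1 m' = c m'" "Y1 m' = beta m'" "X2 m' = c m'" "Y2 m' = beta m'"
      using HH mm ab by (simp_all add: X1 Y1 X2 Y2)
    have "c m' + (m' - m) \<le> c m" using cm mm by blast
    then show ?thesis using i1 i2 mm HH unfolding e inQ_def by (elim disjE conjE; linarith)
  next
    case HS
    have e: "X1 m = c m" "Y1 m = beta m" "X2 m = c m" "Y2 m = beta m" "X1 m' = c (Suc m')" "Y1 m' = beta (Suc m')" "X2 m' = c (Suc m')" "Y2 m' = beta (Suc m')"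
      using HS mm ab by (simp_all add: X1 Y1 X2 Y2)
    have "c (Suc m') + (Suc m' - m) \<le> c m" using cm[of m "Suc m'"] HS mm ab by simp
    then show ?thesis using i1 i2 mm HS unfolding e inQ_def by (elim disjE conjE; linarith)
  next
    case HB
    have e: "X1 m = c m" "Y1 m = beta m" "X2 m = c m" "Y2 m = beta m" "X1 m' = c b - 1" "Y1 m' = beta b + 1" "X2 m' = c a" "Y2 m' = beta a"
      using HB mm ab by (simp_all add: X1 Y1 X2 Y2)
    have h1: "c a + (a - m) \<le> c m" using cm[of m a] HB mm ab by simp
    have h2: "c b + (b - m) \<le> c m" using cm[of m b] HB mm ab by simp
    have h3: "b \<le> beta b" using bt[of b] ab by simp
    have "c a < c m" "c b < c m" "m < b" using h1 h2 HB ab by auto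
    then show ?thesis using i1 i2 h3 HB unfolding e inQ_def by (elim disjE conjE; linarith)
  next
    case HT
    have "c m' + (m' - m) \<le> c m" using cm mm by blast
    have "b \<le> beta b" "m' \<le> beta m'" using bt ab mm by auto
    then have g: "m' \<le> Y1 m'" "X1 m' \<le> X2 m'" "X2 m' = c m'" using HT ab by (auto simp: X1 Y1 X2 Y2)
    then have "m' \<le> y \<and> x \<le> c m'" using inQ_box[OF i2] by simp
    moreover have e: "X1 m = c m" "Y1 m = beta m" "X2 m = c m" "Y2 m = beta m" using HT by (simp_all add: X1 Y1 X2 Y2)
    ultimately show ?thesis using i1 mm HT \<open>c m' + (m' - m) \<le> c m\<close> unfolding e inQ_def by (elim disjE conjE; linarith)
  next
    case SS
    have e: "X1 m = c (Suc m)" "Y1 m = beta (Suc m)" "X2 m = c (Suc m)" "Y2 m = beta (Suc m)" "X1 m' = c (Suc m')" "Y1 m' = beta (Suc m')" "X2 m' = c (Suc m')" "Y2 m' = beta (Suc m')"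
      using SS mm ab by (simp_all add: X1 Y1 X2 Y2)
    have "c (Suc m') + (m' - m) \<le> c (Suc m)" using cm[of "Suc m" "Suc m'"] SS mm ab by simp
    then show ?thesis using i1 i2 mm SS ab unfolding e inQ_def by (elim disjE conjE; linarith)
  next
    case SB
    have e: "X1 m = c (Suc m)" "Y1 m = beta (Suc m)" "X2 m = c (Suc m)" "Y2 m = beta (Suc m)" "X1 m' = c b - 1" "Y1 m' = beta b + 1" "X2 m' = c a" "Y2 m' = beta a"
      using SB mm ab by (simp_all add: X1 Y1 X2 Y2)
    have "c b \<le> c (Suc m)" using cm[of "Suc m" b] SB mm ab by (cases "Suc m = b") auto
    moreover have "c (Suc m) < c a" using cm[of a "Suc m"] SB mm ab by arith
    moreover have "beta (Suc m) \<le> beta b" using mid[of "Suc m"] SB by (cases "Suc m = b") auto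
    moreover have "b \<le> beta b" using bt ab by auto
    moreover have "1 \<le> c b" using c[of b] lb ab by simp
    ultimately show ?thesis using i1 i2 mm SB ab unfolding e inQ_def by (elim disjE conjE; linarith)
  next
    case ST
    have f1: "c b \<le> c (Suc m)" using cm[of "Suc m" b] ST mm ab by (cases "Suc m = b") auto
    have f2: "c m' < c b" using cm[of b m'] ST mm ab by arith
    have "b \<le> beta b" "m' \<le> beta m'" using bt ab mm by auto
    then have g: "m' \<le> Y1 m'" "X1 m' \<le> X2 m'" "X2 m' = c m'" using ST ab by (auto simp: X1 Y1 X2 Y2)
    then have f3: "m' \<le> y \<and> x \<le> c m'" using inQ_box[OF i2] by simp
    have e: "X1 m = c (Suc m)" "Y1 m = beta (Suc m)" "X2 m = c (Suc m)" "Y2 m = beta (Suc m)" using ST by (simp_all add: X1 Y1 X2 Y2)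
    show ?thesis using i1 mm ST f1 f2 f3 unfolding e inQ_def by (elim disjE conjE; linarith)
  next
    case BZ
    have e: "X1 m = c b - 1" "Y1 m = beta b + 1" "X2 m = c a" "Y2 m = beta a" "X1 m' = c m' - 1" "Y1 m' = beta b + 1 + (m' - b)" "X2 m' = c m'" "Y2 m' = beta m'"
      using BZ mm ab by (simp_all add: X1 Y1 X2 Y2)
    have f1: "c m' + m' = c b + b" using ceq[of b m'] BZ mm ab by simp
    have f2: "c b \<le> c a" using cm[of a b] ab by arith
    have f3: "n - m' + lam b = c m'" using cge[of m'] BZ mm by simp
    define p where "p = n - m"
    define p' where "p' = n - m'"
    define q where "q = c b - 1"
    define q' where "q' = c m' - 1"
    define s' where "s' = beta b + 1 + (m' - b)"
    have g: "p + m = n" "p' + m' = n" "q + 1 = c b" "q' + 1 = c m'" "s' + b = beta b + 1 + m'"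
      using mm ab lb BZ f1 f3 unfolding p_def p'_def q_def q'_def s'_def by (simp_all add: c)
    have j1: "inQ p m q (beta b + 1) (c a) (beta a) x y" using i1 unfolding e p_def q_def .
    have j2: "inQ p' m' q' s' (c m') (beta m') x y" using i2 unfolding e p'_def q'_def s'_def .
    show ?thesis using j1 j2 g f1 f2 f3[unfolded p'_def[symmetric]] mm BZ ab lb bb unfolding inQ_def by (elim disjE conjE; linarith)
  next
    case BH
    have e: "X1 m = c b - 1" "Y1 m = beta b + 1" "X2 m = c a" "Y2 m = beta a" "X1 m' = c m'" "Y1 m' = beta m'" "X2 m' = c m'" "Y2 m' = beta m'"
      using BH mm ab by (simp_all add: X1 Y1 X2 Y2)
    have "lam m' < lam b" using lm[of b m'] BH mm ab by auto
    then have f1: "c m' + m' + 1 \<le> c b + b" using cm[of b m'] BH mm ab by arith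
    have f2: "c b \<le> c a" using cm[of a b] ab by arith
    define p where "p = n - m"
    define p' where "p' = n - m'"
    define q where "q = c b - 1"
    have g: "p + m = n" "p' + m' = n" "q + 1 = c b"
      using mm ab lb BH unfolding p_def p'_def q_def by (simp_all add: c)
    have j1: "inQ p m q (beta b + 1) (c a) (beta a) x y" using i1 unfolding e p_def q_def .
    have j2: "inQ p' m' (c m') (beta m') (c m') (beta m') x y" using i2 unfolding e p'_def .
    show ?thesis using j1 j2 g f1 f2 mm BH ab lb bb unfolding inQ_def by (elim disjE conjE; linarith)
  next
    case ZZ
    have e: "X1 m = c m - 1" "Y1 m = beta b + 1 + (m - b)" "X2 m = c m" "Y2 m = beta m" "X1 m' = c m' - 1" "Y1 m' = beta b + 1 + (m' - b)" "X2 m' = c m'" "Y2 m' = beta m'"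
      using ZZ mm ab by (simp_all add: X1 Y1 X2 Y2)
    have f1: "c m' + m' = c m + m" using ceq[of m m'] ZZ mm ab by simp
    have f3: "n - m' + lam b = c m'" "n - m + lam b = c m" using cge[of m'] cge[of m] ZZ mm by auto
    define p where "p = n - m"
    define p' where "p' = n - m'"
    define q where "q = c m - 1"
    define q' where "q' = c m' - 1"
    define s where "s = beta b + 1 + (m - b)"
    define s' where "s' = beta b + 1 + (m' - b)"
    have g: "p + m = n" "p' + m' = n" "q + 1 = c m" "q' + 1 = c m'" "s + b = beta b + 1 + m" "s' + b = beta b + 1 + m'"
      "p' + lam b = c m'" "p + lam b = c m"
      using mm ab lb ZZ f1 f3 unfolding p_def p'_def q_def q'_def s_def s'_def by (simp_all add: c)
    have j1: "inQ p m q s (c m) (beta m) x y" using i1 unfolding e p_def q_def s_def .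
    have j2: "inQ p' m' q' s' (c m') (beta m') x y" using i2 unfolding e p'_def q'_def s'_def .
    show ?thesis using j1 j2 g f1 mm ZZ lb bb unfolding inQ_def by (elim disjE conjE; linarith)
  next
    case ZH
    have e: "X1 m = c m - 1" "Y1 m = beta b + 1 + (m - b)" "X2 m = c m" "Y2 m = beta m" "X1 m' = c m'" "Y1 m' = beta m'" "X2 m' = c m'" "Y2 m' = beta m'"
      using ZH mm ab by (simp_all add: X1 Y1 X2 Y2)
    have "lam m' < lam m" using lm[of m m'] ZH mm ab by auto
    then have f1: "c m' + m' + 1 \<le> c m + m" using cm[of m m'] mm by arith
    have f3: "n - m + lam b = c m" using cge[of m] ZH mm by auto
    define p where "p = n - m"
    define p' where "p' = n - m'"
    define q where "q = c m - 1"
    define s where "s = beta b + 1 + (m - b)"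
    have g: "p + m = n" "p' + m' = n" "q + 1 = c m" "s + b = beta b + 1 + m" "p + lam b = c m"
      using mm ab lb ZH f3 unfolding p_def p'_def q_def s_def by (simp_all add: c)
    have j1: "inQ p m q s (c m) (beta m) x y" using i1 unfolding e p_def q_def s_def .
    have j2: "inQ p' m' (c m') (beta m') (c m') (beta m') x y" using i2 unfolding e p'_def .
    show ?thesis using j1 j2 g f1 mm ZH lb bb unfolding inQ_def by (elim disjE conjE; linarith)
  next
    case HZ
    have "lam m \<le> lam b" using lm[of b m] HZ mm ab by auto
    moreover have "lam m' \<le> lam m" using lm[of m m'] mm by auto
    ultimately show ?thesis using HZ by auto
  next
    case HH2
    have e: "X1 m = c m" "Y1 m = beta m" "X2 m = c m" "Y2 m = beta m" "X1 m' = c m'" "Y1 m' = beta m'" "X2 m' = c m'" "Y2 m' = beta m'"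
      using HH2 mm ab by (simp_all add: X1 Y1 X2 Y2)
    have "c m' + (m' - m) \<le> c m" using cm mm by blast
    then show ?thesis using i1 i2 mm HH2 ab unfolding e inQ_def by (elim disjE conjE; linarith)
  qed
qed

lemma core_LD:
  fixes n a b :: nat and lam beta :: "nat \<Rightarrow> nat"
  assumes part: "is_partition n lam" and up: "beta \<in> Upper n"
  and ab: "1 \<le> a" "a < b" "b \<le> n"
  and lb: "1 \<le> lam b"
  and bab: "beta b < beta a"
  and mid: "\<And>m. a < m \<Longrightarrow> m < b \<Longrightarrow> beta m \<le> beta b"
  and tail: "\<And>m. b < m \<Longrightarrow> m \<le> n \<Longrightarrow> lam m = lam b \<Longrightarrow> beta b + (m - b) + 1 \<le> beta m"
  shows "LD n lam beta (cyc a b) \<noteq> {}"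
proof -
  define c where "c i = lam i + n - i" for i
  define X1 where "X1 k = (if k < a then c k else if k < b then c (Suc k) else if k = b then c b - 1
              else if lam k = lam b then c k - 1 else c k)" for k
  define Y1 where "Y1 k = (if k < a then beta k else if k < b then beta (Suc k) else if k = b then beta b + 1
              else if lam k = lam b then beta b + 1 + (k - b) else beta k)" for k
  define X2 where "X2 k = (if k < a then c k else if k < b then c (Suc k) else if k = b then c a else c k)" for k
  define Y2 where "Y2 k = (if k < a then beta k else if k < b then beta (Suc k) else if k = b then beta a else beta k)" for k
  define Lam where "Lam k = Qp (n-k) k (X1 k) (Y1 k) (X2 k) (Y2 k)" for k
  have lm: "\<And>i j. 1 \<le> i \<Longrightarrow> i \<le> j \<Longrightarrow> j \<le> n \<Longrightarrow> lam j \<le> lam i"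
    using lam_mono[OF part] by blast
  have bt: "\<And>i. 1 \<le> i \<Longrightarrow> i \<le> n \<Longrightarrow> i \<le> beta i \<and> beta i \<le> n"
    using up unfolding Upper_def by auto
  have cm: "c j + (j - i) \<le> c i" if "1 \<le> i" "i < j" "j \<le> n" for i j
  proof -
    have "lam j \<le> lam i" using lm that by simp
    then show ?thesis using that unfolding c_def by auto
  qed
  have props: "n - k \<le> X1 k \<and> X1 k \<le> X2 k \<and> k \<le> Y1 k \<and> Y1 k \<le> Y2 k" if k: "1 \<le> k" "k \<le> n" for k
  proof -
    consider (H) "k < a" | (S) "a \<le> k" "k < b" | (B) "k = b" | (Z) "b < k" "lam k = lam b"
      | (H2) "b < k" "lam k \<noteq> lam b" by linarith
    then show ?thesis
    proof cases
      case H then show ?thesis using bt[OF k] by (simp add: X1_def X2_def Y1_def Y2_def c_def)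
    next
      case S
      have "lam b \<le> lam (Suc k)" using lm[of "Suc k" b] S ab by simp
      moreover have "Suc k \<le> beta (Suc k)" using bt[of "Suc k"] S ab by simp
      ultimately show ?thesis using S lb ab by (simp add: X1_def X2_def Y1_def Y2_def c_def)
    next
      case B
      have "c b \<le> c a" using cm[of a b] ab by simp
      moreover have "b \<le> beta b" using bt[of b] ab by simp
      ultimately show ?thesis using B lb ab bab by (simp add: X1_def X2_def Y1_def Y2_def c_def; arith)
    next
      case Z
      have "b \<le> beta b" using bt[of b] ab by simp
      moreover have "beta b + (k - b) + 1 \<le> beta k" using tail Z k by simp
      ultimately show ?thesis using Z lb ab k by (simp add: X1_def X2_def Y1_def Y2_def c_def; arith)
    next
      case H2 then show ?thesis using bt[OF k] ab by (simp add: X1_def X2_def Y1_def Y2_def c_def)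
    qed
  qed
  have endp: "(X2 k, Y2 k) = terminal n lam beta (cyc a b k)" for k
    using ab by (simp add: X2_def Y2_def cyc_def terminal_def c_def)
  have disj0: "set (Lam m) \<inter> set (Lam m') = {}" if "1 \<le> m" "m < m'" "m' \<le> n" for m m'
  proof -
    { fix x y assume "(x, y) \<in> set (Lam m)" "(x, y) \<in> set (Lam m')"
      then have i1: "inQ (n-m) m (X1 m) (Y1 m) (X2 m) (Y2 m) x y"
        and i2: "inQ (n-m') m' (X1 m') (Y1 m') (X2 m') (Y2 m') x y"
        unfolding Lam_def Qp_set by auto
      have False
        by (rule pair_disj[OF c_def lm bt ab lb bab mid X1_def Y1_def X2_def Y2_def that i1 i2])
    }
    then show ?thesis by auto
  qed
  have "Lam \<in> LD n lam beta (cyc a b)"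
    unfolding LD_def
  proof (intro CollectI conjI ballI impI)
    fix m assume m: "m \<in> {1..n}"
    then have pr: "n - m \<le> X1 m" "X1 m \<le> X2 m" "m \<le> Y1 m" "Y1 m \<le> Y2 m" "1 \<le> m" using props by auto
    note Q = Qp_props[OF pr]
    show "lattice_path (Lam m)" using Q by (simp add: Lam_def)
    show "hd (Lam m) = (n - m, m)" using Q by (simp add: Lam_def)
    show "last (Lam m) = terminal n lam beta (cyc a b m)" using Q endp by (simp add: Lam_def)
  next
    fix m m' assume "m \<in> {1..n}" "m' \<in> {1..n}" "m \<noteq> m'"
    then show "set (Lam m) \<inter> set (Lam m') = {}"
      using disj0[of m m'] disj0[of m' m] by (cases "m < m'") (auto simp: Int_commute)
  qed
  then show ?thesis by blast
qed

lemma top_props: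
  assumes "1 \<le> i" "i \<le> n"
  shows "i \<le> carrel_top n lam i \<and> carrel_top n lam i \<le> n \<and> (carrel_top n lam i \<in> Rset n lam \<or> carrel_top n lam i = n)"
proof -
  let ?S = "{q \<in> Rset n lam \<union> {n}. i \<le> q}"
  have fin: "finite ?S" by (rule finite_subset[of _ "{..n}"]) (auto simp: Rset_def)
  have "n \<in> ?S" using assms by auto
  then have "Min ?S \<in> ?S" using fin Min_in by blast
  then show ?thesis unfolding carrel_top_def by (auto simp: Rset_def)
qed

lemma low_props:
  assumes "1 \<le> t"
  shows "carrel_low n lam t < t" and "q \<in> Rset n lam \<Longrightarrow> q < t \<Longrightarrow> q \<le> carrel_low n lam t"
proof -
  let ?S = "{q \<in> Rset n lam \<union> {0}. q < t}"
  have fin: "finite ?S" by (rule finite_subset[of _ "{..<t}"]) auto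
  have "0 \<in> ?S" using assms by auto
  then have "Max ?S \<in> ?S" using fin Max_in by blast
  then show "carrel_low n lam t < t" unfolding carrel_low_def by auto
  show "q \<le> carrel_low n lam t" if "q \<in> Rset n lam" "q < t"
    unfolding carrel_low_def using that fin by (intro Max_ge) auto
qed

lemma tail_lem:
  assumes part: "is_partition n lam" and up: "beta \<in> Upper n"
    and t: "t \<le> n" "t \<in> Rset n lam \<or> t = n" and b: "b \<in> crit L t beta" "1 \<le> b"
    and m: "b < m" "m \<le> n" "lam m = lam b"
  shows "beta b + (m - b) + 1 \<le> beta m"
proof -
  have bt: "b \<le> t" using crit_le[OF b(1)] .
  have "m \<le> t"
  proof (rule ccontr)
    assume nm: "\<not> m \<le> t"
    then have tR: "t \<in> Rset n lam" using t m by auto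
    then have "lam (Suc t) < lam t" "1 \<le> t" "t < n" by (auto simp: Rset_def)
    moreover have "lam m \<le> lam (Suc t)" using lam_mono[OF part, of "Suc t" m] nm m by simp
    moreover have "lam t \<le> lam b" using lam_mono[OF part, of b t] bt b t by simp
    ultimately show False using m by simp
  qed
  then have h: "int (beta b) - int b < int (beta m) - int m" using crit_min[OF b(1) m(1)] by simp
  then have "int (beta b) + int m < int (beta m) + int b" by linarith
  then have "beta b + m < beta m + b" by (metis of_nat_add of_nat_less_iff)
  then show ?thesis using m by arith
qed

lemma lb_lem:
  assumes part: "is_partition n lam" and up: "beta \<in> Upper n"
    and t: "t \<le> n" "t \<in> Rset n lam \<or> t = n" and b: "b \<in> crit L t beta" "1 \<le> b"
    and j: "1 \<le> j" "j \<le> n" "beta b < beta j"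
  shows "1 \<le> lam b"
proof (rule ccontr)
  assume "\<not> 1 \<le> lam b"
  then have l0: "lam b = 0" by simp
  have bt: "b \<le> t" using crit_le[OF b(1)] .
  have tn: "t = n"
  proof (rule ccontr)
    assume "t \<noteq> n"
    then have "t \<in> Rset n lam" using t by auto
    then have "lam (Suc t) < lam t" "1 \<le> t" "t < n" by (auto simp: Rset_def)
    moreover have "lam t \<le> lam b" using lam_mono[OF part, of b t] bt b t by simp
    ultimately show False using l0 by simp
  qed
  have btb: "b \<le> beta b \<and> beta b \<le> n" using up b bt tn unfolding Upper_def by auto
  have bn: "beta n \<le> n" using up b bt tn unfolding Upper_def by auto
  have "b = n"
  proof (rule ccontr)
    assume "b \<noteq> n"
    then have "b < n" using bt tn by simp
    then have "int (beta b) - int b < int (beta n) - int n" using crit_min[OF b(1), of n] tn by simp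
    then show False using btb bn by linarith
  qed
  moreover have "beta j \<le> n" using up j unfolding Upper_def by auto
  ultimately show False using btb j by simp
qed

lemma a_exists:
  fixes i b :: nat and beta :: "nat \<Rightarrow> nat"
  assumes "i < b" "beta b < beta i"
  shows "\<exists>a. i \<le> a \<and> a < b \<and> beta b < beta a \<and> (\<forall>m. a < m \<longrightarrow> m < b \<longrightarrow> beta m \<le> beta b)"
proof -
  let ?A = "{j. i \<le> j \<and> j < b \<and> beta b < beta j}"
  have fin: "finite ?A" by (rule finite_subset[of _ "{..<b}"]) auto
  have "i \<in> ?A" using assms by auto
  then have inA: "Max ?A \<in> ?A" using fin Max_in by blast
  have "\<forall>m. Max ?A < m \<longrightarrow> m < b \<longrightarrow> beta m \<le> beta b"
  proof (intro allI impI)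
    fix m assume "Max ?A < m" "m < b"
    show "beta m \<le> beta b"
    proof (rule ccontr)
      assume "\<not> beta m \<le> beta b"
      then have "m \<in> ?A" using \<open>Max ?A < m\<close> \<open>m < b\<close> inA by auto
      then have "m \<le> Max ?A" using fin by simp
      then show False using \<open>Max ?A < m\<close> by simp
    qed
  qed
  then show ?thesis using inA by blast
qed

lemma contra:
  fixes n a b :: nat and lam beta :: "nat \<Rightarrow> nat"
  assumes np: "nonpermutable n lam beta"
  and part: "is_partition n lam" and up: "beta \<in> Upper n"
  and ab: "1 \<le> a" "a < b" "b \<le> n"
  and lb: "1 \<le> lam b"
  and bab: "beta b < beta a"
  and mid: "\<And>m. a < m \<Longrightarrow> m < b \<Longrightarrow> beta m \<le> beta b"
  and tail: "\<And>m. b < m \<Longrightarrow> m \<le> n \<Longrightarrow> lam m = lam b \<Longrightarrow> beta b + (m - b) + 1 \<le> beta m"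
  shows False
proof -
  have "cyc a b permutes {1..n}" using cyc_permutes ab by blast
  moreover have "cyc a b \<noteq> id"
  proof
    assume "cyc a b = id"
    then have "cyc a b b = b" by simp
    then show False using ab by (simp add: cyc_def)
  qed
  ultimately have "LD n lam beta (cyc a b) = {}" using np unfolding nonpermutable_def by blast
  then show False using core_LD[OF part up ab lb bab mid tail] by blast
qed

theorem proposition6p3:
  fixes n :: nat and lam beta :: "nat \<Rightarrow> nat"
  assumes "1 \<le> n"
    and "is_partition n lam"
    and "beta \<in> Upper n"
    and "nonpermutable n lam beta"
  shows "beta \<in> UGC n lam \<inter> UBP n lam"
proof -
  note part = assms(2) and up = assms(3) and np = assms(4)
  have ugc: "beta q \<le> beta (Min (crit_carrel n lam beta (carrel_top n lam (Suc q))))"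
    if q: "q \<in> Rset n lam" for q
  proof -
    have q1: "1 \<le> q" "q < n" using q by (auto simp: Rset_def)
    define t where "t = carrel_top n lam (Suc q)"
    have tp: "Suc q \<le> t" "t \<le> n" "t \<in> Rset n lam \<or> t = n"
      using top_props[of "Suc q" n lam] q1 unfolding t_def by auto
    define L where "L = carrel_low n lam t"
    have qL: "q \<le> L" using low_props(2)[of t q n lam] q tp unfolding L_def by simp
    have Lt: "L < t" using low_props(1)[of t n lam] tp unfolding L_def by simp
    define K where "K = crit L t beta"
    have fin: "finite K" unfolding K_def by (rule finite_subset[of _ "{..t}"]) (auto dest: crit_le)
    have "t \<in> K" unfolding K_def by (rule crit.top)
    then have kK: "Min K \<in> K" using fin Min_in by blast
    define k where "k = Min K"
    have kc: "k \<in> crit L t beta" using kK unfolding k_def K_def .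
    have qk: "q < k" using crit_gt[OF kc Lt] qL by simp
    have kn: "k \<le> n" using crit_le[OF kc] tp by simp
    show ?thesis
    proof (rule ccontr)
      assume "\<not> beta q \<le> beta (Min (crit_carrel n lam beta (carrel_top n lam (Suc q))))"
      then have bq: "beta k < beta q" unfolding k_def K_def L_def t_def crit_carrel_def by simp
      obtain a where a: "q \<le> a" "a < k" "beta k < beta a" "\<forall>m. a < m \<longrightarrow> m < k \<longrightarrow> beta m \<le> beta k"
        using a_exists[OF qk bq] by blast
      have k1: "1 \<le> k" using qk by simp
      have lb: "1 \<le> lam k" using lb_lem[OF part up tp(2) tp(3) kc k1, of q] q1 bq by simp
      show False
        by (rule contra[OF np part up _ a(2) kn lb a(3)])
           (use a q1 tail_lem[OF part up tp(2) tp(3) kc k1] in auto)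
    qed
  qed
  have ubp: "beta i \<le> platform n lam beta i" if i: "i \<in> {1..n}" for i
  proof -
    define t where "t = carrel_top n lam i"
    have tp: "i \<le> t" "t \<le> n" "t \<in> Rset n lam \<or> t = n"
      using top_props[of i n lam] i unfolding t_def by auto
    define L where "L = carrel_low n lam t"
    define X where "X = {x \<in> crit L t beta. i \<le> x}"
    have fin: "finite X" unfolding X_def by (rule finite_subset[of _ "{..t}"]) (auto dest: crit_le)
    have "t \<in> X" unfolding X_def using tp crit.top by blast
    then have bX: "Min X \<in> X" using fin Min_in by blast
    define b where "b = Min X"
    have bc: "b \<in> crit L t beta" "i \<le> b" using bX unfolding b_def X_def by auto
    have bn: "b \<le> n" using crit_le[OF bc(1)] tp by simp
    show ?thesis
    proof (rule ccontr)
      assume "\<not> beta i \<le> platform n lam beta i"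
      then have bi: "beta b < beta i" unfolding platform_def xcrit_def crit_carrel_def b_def X_def L_def t_def by simp
      then have ib: "i < b" using bc by (cases "i = b") auto
      obtain a where a: "i \<le> a" "a < b" "beta b < beta a" "\<forall>m. a < m \<longrightarrow> m < b \<longrightarrow> beta m \<le> beta b"
        using a_exists[OF ib bi] by blast
      have b1: "1 \<le> b" using ib i by simp
      have lb: "1 \<le> lam b" using lb_lem[OF part up tp(2) tp(3) bc(1) b1, of i] i bi by simp
      show False
        by (rule contra[OF np part up _ a(2) bn lb a(3)])
           (use a i tail_lem[OF part up tp(2) tp(3) bc(1) b1] in auto)
    qed
  qed
  show ?thesis using ugc ubp up unfolding UGC_def UBP_def by auto
qed

end
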